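(* Assume (A1) and fix all parameters except $\omega$. (i) As a function of $\omega\in[0,1]$, $P^*(\omega)$ is either strictly increasing on $[0,1]$, or strictly decreasing on $[0,1]$, or there exists $\omega_{P^*}\in(0,1)$ such that $P^*$ is strictly decreasing on $[0,\omega_{P^*})$ and strictly increasing on $(\omega_{P^*},1]$. As a function of $\omega\in[0,1]$, $Y^*(\omega)$ is either strictly increasing on $[0,1]$, or there exists $\omega_{Y^*}\in(0,1)$ such that $Y^*$ is strictly increasing on $[0,\omega_{Y^*})$ and strictly decreasing on $(\omega_{Y^*},1]$. (ii) Assume moreover $1/\sqrt{2\beta}<b<\min\{dA/(1-c),F^*\}$ and $$P^L(\omega)\ne P^*(\omega)-\frac{1-c}{1-c-\omega^2dh}\sqrt{b^2-\frac{1}{2\beta}}\quad\text{for all }\omega\in(0,1).$$ Then for each $j\in\{L,H\}$: on $(0,1)$, $P^j$ is either strictly increasing, or strictly decreasing, or there exists $\omega_{P^j}\in(0,1)$ such that $P^j$ is strictly decreasing on $(0,\omega_{P^j})$ and strictly increasing on $(\omega_{P^j},1)$; and $Y^j$ is either strictly increasing on $(0,1)$, or there exists $\omega_{Y^j}\in(0,1)$ such that $Y^j$ is strictly increasing on $(0,\omega_{Y^j})$ and strictly decreasing on $(\omega_{Y^j},1)$.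
   Context: Let $g_I,g_P:\mathbb{R}\to\mathbb{R}$ be continuously differentiable functions, each satisfying: $g(0)=0$ and $g$ strictly increasing; $g$ convex on $(-\infty,0]$ and concave on $[0,+\infty)$, with maximal slope attained at $0$ and $g'(0)=1$; $g$ bounded above and below. Parameters: $A>0$, $c\in(0,1)$, $\gamma>0$, $\omega\in[0,1]$, $h>0$, $d>0$, $\sigma>0$, $\mu>0$, $F^*>0$, $b>0$, $\beta>0$. Let $G=(G_1,G_2,G_3):\mathbb{R}^3\to\mathbb{R}^3$ be defined by $G_1(Y,P,Z)=A+cY+\gamma g_I(Y-Z)+\omega hP$, $G_2(Y,P,Z)=P+\sigma g_P\big(\mu\big((1-\omega)F^*+\omega dY-P+b(2\alpha(Y,P)-1)\big)\big)$, $G_3(Y,P,Z)=Y$, where $\alpha(Y,P)=\dfrac{1}{1+e^{-4b\beta(P-(1-\omega)F^*-\omega dY)}}$. A steady state is a fixed point of $G$. Assumption (A1): $1-c-hd>0$. The steady state $S^*=(Y^*,P^*,Y^* )$ has $Y^*(\omega)=\frac{A+\omega(1-\omega)hF^*}{1-c-\omega^2dh}$, $P^*(\omega)=\frac{(1-\omega)(1-c)F^*+\omega dA}{1-c-\omega^2dh}$. When $b>1/\sqrt{2\beta}$, $G$ has exactly three steady states for each $\omega$, and $S^L(\omega)=(Y^L,P^L,Y^L)$, $S^H(\omega)=(Y^H,P^H,Y^H)$ denote the two with $P^L<P^*<P^H$. *)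

theory Defs
  imports "HOL-Analysis.Analysis"
begin

definition admissible_g :: "(real \<Rightarrow> real) \<Rightarrow> bool" where
  "admissible_g g \<longleftrightarrow>
     (\<forall>x. g differentiable at x) \<and> continuous_on UNIV (deriv g) \<and>
     g 0 = 0 \<and> strict_mono g \<and>
     convex_on {..0} g \<and> concave_on {0..} g \<and>
     (\<forall>x. deriv g x \<le> deriv g 0) \<and> deriv g 0 = 1 \<and>
     bdd_above (range g) \<and> bdd_below (range g)"

definition alpha_fn :: "real \<Rightarrow> real \<Rightarrow> real \<Rightarrow> real \<Rightarrow> real \<Rightarrow> real \<Rightarrow> real \<Rightarrow> real" where
  "alpha_fn b \<beta> \<omega> Fs d Y P = 1 / (1 + exp (- 4 * b * \<beta> * (P - (1 - \<omega>) * Fs - \<omega> * d * Y)))"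

definition G_map ::
  "(real \<Rightarrow> real) \<Rightarrow> (real \<Rightarrow> real) \<Rightarrow> real \<Rightarrow> real \<Rightarrow> real \<Rightarrow> real \<Rightarrow> real \<Rightarrow> real \<Rightarrow>
   real \<Rightarrow> real \<Rightarrow> real \<Rightarrow> real \<Rightarrow> real \<Rightarrow> real \<times> real \<times> real \<Rightarrow> real \<times> real \<times> real" where
  "G_map gI gP A c \<gamma> \<omega> h d \<sigma> \<mu> Fs b \<beta> = (\<lambda>(Y, P, Z).
     (A + c * Y + \<gamma> * gI (Y - Z) + \<omega> * h * P,
      P + \<sigma> * gP (\<mu> * ((1 - \<omega>) * Fs + \<omega> * d * Y - P + b * (2 * alpha_fn b \<beta> \<omega> Fs d Y P - 1))),
      Y))"

definition Ystar :: "real \<Rightarrow> real \<Rightarrow> real \<Rightarrow> real \<Rightarrow> real \<Rightarrow> real \<Rightarrow> real" where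
  "Ystar A c h d Fs \<omega> = (A + \<omega> * (1 - \<omega>) * h * Fs) / (1 - c - \<omega>\<^sup>2 * d * h)"

definition Pstar :: "real \<Rightarrow> real \<Rightarrow> real \<Rightarrow> real \<Rightarrow> real \<Rightarrow> real \<Rightarrow> real" where
  "Pstar A c h d Fs \<omega> = ((1 - \<omega>) * (1 - c) * Fs + \<omega> * d * A) / (1 - c - \<omega>\<^sup>2 * d * h)"

end

theory Submission
  imports Defs
begin

lemma deriv_incr:
  fixes f f' :: "real \<Rightarrow> real"
  assumes xy: "x < y"
    and der: "\<And>z. x \<le> z \<Longrightarrow> z \<le> y \<Longrightarrow> (f has_real_derivative f' z) (at z)"
    and nn: "\<And>z. x < z \<Longrightarrow> z < y \<Longrightarrow> f' z \<ge> 0"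
    and pos: "\<And>z. x < z \<Longrightarrow> z < y \<Longrightarrow> z \<noteq> zz \<Longrightarrow> f' z > 0"
  shows "f x < f y"
proof (cases "x < zz \<and> zz < y")
  case False
  from MVT2[OF xy der] obtain z where z: "x < z" "z < y" "f y - f x = (y - x) * f' z" by auto
  with False have "f' z > 0" using pos by auto
  with z xy have "(y - x) * f' z > 0" by simp
  with z show ?thesis by linarith
next
  case True
  from MVT2[of x zz f f'] True der obtain z where z: "x < z" "z < zz" "f zz - f x = (zz - x) * f' z" by auto
  hence "f' z > 0" using pos True by auto
  with z have "(zz - x) * f' z > 0" by simp
  with z have 1: "f x < f zz" by linarith
  from MVT2[of zz y f f'] True der obtain u where u: "zz < u" "u < y" "f y - f zz = (y - zz) * f' u" by auto
  hence "f' u > 0" using pos True by auto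
  with u have "(y - zz) * f' u > 0" by simp
  with u have "f zz < f y" by linarith
  with 1 show ?thesis by simp
qed

lemma deriv_smono:
  fixes f f' :: "real \<Rightarrow> real"
  assumes sub: "S \<subseteq> {0..1}" and conv: "\<And>x y z. x \<in> S \<Longrightarrow> y \<in> S \<Longrightarrow> x < z \<Longrightarrow> z < y \<Longrightarrow> z \<in> I"
    and der: "\<And>z. 0 \<le> z \<Longrightarrow> z \<le> 1 \<Longrightarrow> (f has_real_derivative f' z) (at z)"
    and nn: "\<And>z. z \<in> I \<Longrightarrow> f' z \<ge> 0"
    and pos: "\<And>z. z \<in> I \<Longrightarrow> z \<noteq> zz \<Longrightarrow> f' z > 0"
  shows "strict_mono_on S f"
proof (rule strict_mono_onI)
  fix x y assume xy: "x \<in> S" "y \<in> S" "x < y"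
  show "f x < f y"
  proof (rule deriv_incr[OF xy(3), where f'=f' and zz=zz])
    fix z assume "x \<le> z" "z \<le> y"
    moreover have "0 \<le> x" "y \<le> 1" using xy sub by auto
    ultimately show "(f has_real_derivative f' z) (at z)" using der by simp
  next
    fix z assume "x < z" "z < y" thus "f' z \<ge> 0" using conv[OF xy(1,2)] nn by blast
  next
    fix z assume "x < z" "z < y" "z \<noteq> zz" thus "f' z > 0" using conv[OF xy(1,2)] pos by blast
  qed
qed

lemma deriv_smono_strict:
  fixes f f' :: "real \<Rightarrow> real"
  assumes sub: "S \<subseteq> {0..1}" and conv: "\<And>x y z. x \<in> S \<Longrightarrow> y \<in> S \<Longrightarrow> x < z \<Longrightarrow> z < y \<Longrightarrow> z \<in> I"
    and der: "\<And>z. 0 \<le> z \<Longrightarrow> z \<le> 1 \<Longrightarrow> (f has_real_derivative f' z) (at z)"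
    and pos: "\<And>z. z \<in> I \<Longrightarrow> f' z > 0"
  shows "strict_mono_on S f"
  by (rule deriv_smono[OF sub conv der, where zz=0]) (use pos in \<open>auto intro: less_imp_le\<close>)

lemma deriv_santimono:
  fixes f f' :: "real \<Rightarrow> real"
  assumes sub: "S \<subseteq> {0..1}" and conv: "\<And>x y z. x \<in> S \<Longrightarrow> y \<in> S \<Longrightarrow> x < z \<Longrightarrow> z < y \<Longrightarrow> z \<in> I"
    and der: "\<And>z. 0 \<le> z \<Longrightarrow> z \<le> 1 \<Longrightarrow> (f has_real_derivative f' z) (at z)"
    and neg: "\<And>z. z \<in> I \<Longrightarrow> f' z < 0"
  shows "strict_antimono_on S f"
proof -
  have "strict_mono_on S (\<lambda>x. - f x)"
    by (rule deriv_smono[OF sub conv, where f'="\<lambda>z. - f' z" and zz=0])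
       (use der neg in \<open>auto intro!: derivative_eq_intros\<close>, use neg in force)
  thus ?thesis unfolding monotone_on_def by auto
qed


lemma root_unique_pos_aux:
  fixes b k x1 x2 :: real
  assumes b: "b > 0" and k: "k > 0" and x: "0 < x1" "x1 < x2"
    and r1: "x1 = b * tanh (k * x1)" and r2: "x2 = b * tanh (k * x2)"
  shows False
proof -
  define G where "G x = b * tanh (k * x) - x" for x
  define G' where "G' x = b * (k * (1 - tanh (k * x) ^ 2)) - 1" for x
  have der: "(G has_real_derivative G' x) (at x)" for x
    unfolding G_def G'_def
    by (auto intro!: derivative_eq_intros simp: cosh_real_pos[THEN less_imp_neq, symmetric]) 
  have G0: "G 0 = 0" "G x1 = 0" "G x2 = 0" using r1 r2 by (auto simp: G_def)
  from MVT2[of 0 x1 G G'] x der obtain z1 where z1: "0 < z1" "z1 < x1" "G x1 - G 0 = (x1 - 0) * G' z1" by blast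
  from MVT2[of x1 x2 G G'] x der obtain z2 where z2: "x1 < z2" "z2 < x2" "G x2 - G x1 = (x2 - x1) * G' z2" by blast
  have "G' z1 = 0" using z1 G0 x by simp
  moreover have "G' z2 = 0" using z2 G0 x by simp
  ultimately have "b * (k * (1 - tanh (k * z1) ^ 2)) = b * (k * (1 - tanh (k * z2) ^ 2))" unfolding G'_def by linarith
  hence "k * (1 - tanh (k * z1) ^ 2) = k * (1 - tanh (k * z2) ^ 2)" using b by simp
  hence "1 - tanh (k * z1) ^ 2 = 1 - tanh (k * z2) ^ 2" using k by simp
  hence eq: "tanh (k * z1) ^ 2 = tanh (k * z2) ^ 2" by simp
  have "0 < tanh (k * z1)" using k z1 by simp
  moreover have "tanh (k * z1) < tanh (k * z2)" using k z1 z2 by simp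
  ultimately have "tanh (k * z1) ^ 2 < tanh (k * z2) ^ 2" by (simp add: power_strict_mono)
  with eq show False by simp
qed

lemma root_unique_pos:
  fixes b k x1 x2 :: real
  assumes "b > 0" "k > 0" "0 < x1" "0 < x2"
    and "x1 = b * tanh (k * x1)" "x2 = b * tanh (k * x2)"
  shows "x1 = x2"
  using root_unique_pos_aux[of b k x1 x2] root_unique_pos_aux[of b k x2 x1] assms
  by (cases x1 x2 rule: linorder_cases) auto

lemma root_unique_neg:
  fixes b k x1 x2 :: real
  assumes "b > 0" "k > 0" "x1 < 0" "x2 < 0"
    and "x1 = b * tanh (k * x1)" "x2 = b * tanh (k * x2)"
  shows "x1 = x2"
proof -
  have "- x1 = b * tanh (k * (- x1))" "- x2 = b * tanh (k * (- x2))" using assms by simp_all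
  with root_unique_pos[of b k "-x1" "-x2"] assms show ?thesis by simp
qed


definition Pf :: "real \<Rightarrow> real \<Rightarrow> real \<Rightarrow> real \<Rightarrow> real \<Rightarrow> real \<Rightarrow> real \<Rightarrow> real" where
  "Pf A c h d F e w = ((1 - w) * (1 - c) * F + w * d * A + e) / (1 - c - w\<^sup>2 * d * h)"

definition sP :: "real \<Rightarrow> real \<Rightarrow> real \<Rightarrow> real \<Rightarrow> real \<Rightarrow> real \<Rightarrow> real \<Rightarrow> real" where
  "sP A c h d F e w = (d * A - (1 - c) * F) * d * h * w\<^sup>2 + 2 * d * h * ((1 - c) * F + e) * w
      + (d * A - (1 - c) * F) * (1 - c)"

lemma Pf_deriv:
  assumes "1 - c - w\<^sup>2 * d * h \<noteq> 0"
  shows "(Pf A c h d F e has_real_derivative sP A c h d F e w / (1 - c - w\<^sup>2 * d * h)\<^sup>2) (at w)"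
  unfolding Pf_def[abs_def] sP_def
  using assms by (auto intro!: derivative_eq_intros simp: field_simps power2_eq_square)

lemma D_pos:
  fixes c d h z :: real
  assumes "1 - c - h * d > 0" "d > 0" "h > 0" "0 \<le> z" "z \<le> 1"
  shows "1 - c - z\<^sup>2 * d * h > 0"
proof -
  have "z\<^sup>2 \<le> 1" using assms by (simp add: power_le_one)
  hence "z\<^sup>2 * (d * h) \<le> 1 * (d * h)" using assms by (intro mult_right_mono) auto
  hence "z\<^sup>2 * d * h \<le> h * d" by (simp add: algebra_simps)
  thus ?thesis using assms by linarith
qed


lemma P_shape:
  fixes A c h d F e :: real
  assumes c: "0 < c" "c < 1" and h: "h > 0" and d: "d > 0" and A1: "1 - c - h * d > 0"
    and e1: "(1 - c) * F + e > 0" and e2: "d * A + e > 0"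
  shows "strict_mono_on {0..1} (Pf A c h d F e) \<or> strict_antimono_on {0..1} (Pf A c h d F e) \<or>
         (\<exists>w\<in>{0<..<1}. strict_antimono_on {0..<w} (Pf A c h d F e) \<and> strict_mono_on {w<..1} (Pf A c h d F e))"
proof -
  define f where "f = Pf A c h d F e"
  define s where "s = sP A c h d F e"
  define D where "D z = 1 - c - z\<^sup>2 * d * h" for z
  define k where "k = d * A - (1 - c) * F"
  have Dp: "0 \<le> z \<Longrightarrow> z \<le> 1 \<Longrightarrow> D z > 0" for z using D_pos[OF A1 d h] by (simp add: D_def)
  have der: "0 \<le> z \<Longrightarrow> z \<le> 1 \<Longrightarrow> (f has_real_derivative s z / (D z)\<^sup>2) (at z)" for z
    using Pf_deriv[of c z d h A F e] Dp[of z] unfolding f_def s_def D_def by auto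
  have pos: "0 \<le> z \<Longrightarrow> z \<le> 1 \<Longrightarrow> s z > 0 \<Longrightarrow> s z / (D z)\<^sup>2 > 0" for z using Dp[of z] by simp
  have neg: "0 \<le> z \<Longrightarrow> z \<le> 1 \<Longrightarrow> s z < 0 \<Longrightarrow> s z / (D z)\<^sup>2 < 0" for z using Dp[of z]
    by (simp add: divide_neg_pos)
  have posle: "0 \<le> z \<Longrightarrow> z \<le> 1 \<Longrightarrow> s z > 0 \<Longrightarrow> s z / (D z)\<^sup>2 \<ge> 0" for z
    using pos[of z] by simp
  have sform: "s z = k * d * h * z\<^sup>2 + 2 * d * h * ((1 - c) * F + e) * z + k * (1 - c)" for z
    unfolding s_def sP_def k_def by simp
  show ?thesis
  proof (cases "k \<ge> 0")
    case True
    have "s z > 0" if "0 < z" "z \<le> 1" for z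
    proof -
      have "k * d * h * z\<^sup>2 \<ge> 0" using True d h by simp
      moreover have "2 * d * h * ((1 - c) * F + e) * z > 0" using d h e1 that by simp
      moreover have "k * (1 - c) \<ge> 0" using True c by simp
      ultimately show ?thesis unfolding sform by linarith
    qed
    hence "strict_mono_on {0..1} f"
      by (intro deriv_smono_strict[where I="{0<..1}" and f'="\<lambda>z. s z / (D z)\<^sup>2"])
         (use der pos posle in auto)
    thus ?thesis unfolding f_def by simp
  next
    case False
    have smono: "s x < s y" if "0 \<le> x" "x < y" "y \<le> 1" for x y
    proof -
      have "s y - s x = (y - x) * (d * h * (k * (x + y) + 2 * ((1 - c) * F + e)))"
        unfolding sform by (simp add: algebra_simps power2_eq_square)
      moreover have "k * (x + y) > k * 2" using False that by (intro mult_strict_left_mono_neg) auto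
      hence "k * (x + y) + 2 * ((1 - c) * F + e) > 0" using e2 unfolding k_def by (simp add: algebra_simps)
      hence "d * h * (k * (x + y) + 2 * ((1 - c) * F + e)) > 0" using d h by simp
      moreover have "y - x > 0" using that by simp
      ultimately have "s y - s x > 0" by simp
      thus ?thesis by simp
    qed
    have s0: "s 0 < 0" using False c unfolding sform by (simp add: mult_neg_pos)
    show ?thesis
    proof (cases "s 1 \<le> 0")
      case True
      have "s z < 0" if "0 \<le> z" "z < 1" for z using smono[OF that(1,2)] True by simp
      hence "strict_antimono_on {0..1} f"
        by (intro deriv_santimono[where I="{0..<1}" and f'="\<lambda>z. s z / (D z)\<^sup>2"])
           (use der neg in auto)
      thus ?thesis unfolding f_def by simp
    next
      case False
      have "\<exists>w. 0 \<le> w \<and> w \<le> 1 \<and> s w = 0"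
        by (rule IVT) (use s0 False in \<open>auto simp: sform intro!: continuous_intros\<close>)
      then obtain w where w: "0 \<le> w" "w \<le> 1" "s w = 0" by blast
      have w01: "w \<in> {0<..<1}" using w s0 False by (cases "w = 0"; cases "w = 1") auto
      have negI: "z \<in> {0..<w} \<Longrightarrow> s z / (D z)\<^sup>2 < 0" for z
        using neg[of z] smono[of z w] w by auto
      have posI: "z \<in> {w<..1} \<Longrightarrow> s z / (D z)\<^sup>2 > 0" for z
        using pos[of z] smono[of w z] w by auto
      have "strict_antimono_on {0..<w} f"
        apply (rule deriv_santimono[where I="{0..<w}" and f'="\<lambda>z. s z / (D z)\<^sup>2"])
        subgoal using w by auto
        subgoal by auto
        subgoal by (rule der)
        subgoal by (rule negI)
        done
      moreover have "strict_mono_on {w<..1} f"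
        apply (rule deriv_smono_strict[where I="{w<..1}" and f'="\<lambda>z. s z / (D z)\<^sup>2"])
        subgoal using w by auto
        subgoal by auto
        subgoal by (rule der)
        subgoal by (rule posI)
        done
      ultimately show ?thesis unfolding f_def using w01 by blast
    qed
  qed
qed


definition Yf :: "real \<Rightarrow> real \<Rightarrow> real \<Rightarrow> real \<Rightarrow> real \<Rightarrow> real \<Rightarrow> real \<Rightarrow> real" where
  "Yf A c h d F e w = (A + h * w * (F + e) - h * F * w\<^sup>2) / (1 - c - w\<^sup>2 * d * h)"

definition sY :: "real \<Rightarrow> real \<Rightarrow> real \<Rightarrow> real \<Rightarrow> real \<Rightarrow> real \<Rightarrow> real \<Rightarrow> real" where
  "sY A c h d F e w = d * h * (F + e) * w\<^sup>2 + 2 * (d * A - (1 - c) * F) * w + (1 - c) * (F + e)"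

lemma Yf_deriv:
  assumes "1 - c - w\<^sup>2 * d * h \<noteq> 0"
  shows "(Yf A c h d F e has_real_derivative h * sY A c h d F e w / (1 - c - w\<^sup>2 * d * h)\<^sup>2) (at w)"
  unfolding Yf_def[abs_def] sY_def
  using assms by (auto intro!: derivative_eq_intros simp: field_simps power2_eq_square)


lemma Y_shape:
  fixes A c h d F e :: real
  assumes c: "0 < c" "c < 1" and h: "h > 0" and d: "d > 0" and A1: "1 - c - h * d > 0"
    and e1: "F + e > 0"
  shows "strict_mono_on {0..1} (Yf A c h d F e) \<or>
         (\<exists>w\<in>{0<..<1}. strict_mono_on {0..<w} (Yf A c h d F e) \<and> strict_antimono_on {w<..1} (Yf A c h d F e))"
proof -
  define f where "f = Yf A c h d F e"
  define s where "s = sY A c h d F e"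
  define D where "D z = 1 - c - z\<^sup>2 * d * h" for z
  define k where "k = d * A - (1 - c) * F"
  define K where "K = d * h * (F + e)"
  define M where "M = (1 - c) * (F + e)"
  have Kp: "K > 0" using d h e1 by (simp add: K_def)
  have Mp: "M > 0" using c e1 by (simp add: M_def)
  have Dp: "0 \<le> z \<Longrightarrow> z \<le> 1 \<Longrightarrow> D z > 0" for z using D_pos[OF A1 d h] by (simp add: D_def)
  have der: "0 \<le> z \<Longrightarrow> z \<le> 1 \<Longrightarrow> (f has_real_derivative h * s z / (D z)\<^sup>2) (at z)" for z
    using Yf_deriv[of c z d h A F e] Dp[of z] unfolding f_def s_def D_def by auto
  have pos: "0 \<le> z \<Longrightarrow> z \<le> 1 \<Longrightarrow> s z > 0 \<Longrightarrow> h * s z / (D z)\<^sup>2 > 0" for z using Dp[of z] h by simp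
  have nn: "0 \<le> z \<Longrightarrow> z \<le> 1 \<Longrightarrow> s z \<ge> 0 \<Longrightarrow> h * s z / (D z)\<^sup>2 \<ge> 0" for z using Dp[of z] h by simp
  have neg: "0 \<le> z \<Longrightarrow> z \<le> 1 \<Longrightarrow> s z < 0 \<Longrightarrow> h * s z / (D z)\<^sup>2 < 0" for z using Dp[of z] h
    by (simp add: divide_neg_pos mult_pos_neg)
  have sform: "s z = K * z\<^sup>2 + 2 * k * z + M" for z
    unfolding s_def sY_def k_def K_def M_def by simp
  show ?thesis
  proof (cases "k \<ge> 0")
    case True
    have "s z > 0" if "0 \<le> z" "z \<le> 1" for z
    proof -
      have "K * z\<^sup>2 \<ge> 0" using Kp by simp
      moreover have "2 * k * z \<ge> 0" using True that by simp
      ultimately show ?thesis unfolding sform using Mp by linarith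
    qed
    hence "strict_mono_on {0..1} f"
      apply (intro deriv_smono_strict[where I="{0<..<1}" and f'="\<lambda>z. h * s z / (D z)\<^sup>2"])
      subgoal by auto
      subgoal by auto
      subgoal by (rule der)
      subgoal using pos by auto
      done
    thus ?thesis unfolding f_def by simp
  next
    case kneg: False
    show ?thesis
    proof (cases "k\<^sup>2 \<le> K * M")
      case True
      have Ks: "K * s z = (K * z + k)\<^sup>2 + (K * M - k\<^sup>2)" for z
        unfolding sform by (simp add: algebra_simps power2_eq_square)
      have s_nn: "s z \<ge> 0" for z
      proof -
        have "K * s z \<ge> 0" unfolding Ks using True by simp
        thus ?thesis using Kp by (simp add: zero_le_mult_iff)
      qed
      have s_pos: "s z > 0" if "z \<noteq> - k / K" for z
      proof -
        have "K * z + k \<noteq> 0" using that Kp by (auto simp: field_simps)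
        hence "(K * z + k)\<^sup>2 > 0" by simp
        hence "K * s z > 0" unfolding Ks using True by linarith
        thus ?thesis using Kp by (simp add: zero_less_mult_iff)
      qed
      have "strict_mono_on {0..1} f"
        apply (rule deriv_smono[where I="{0<..<1}" and f'="\<lambda>z. h * s z / (D z)\<^sup>2" and zz="- k / K"])
        subgoal by auto
        subgoal by auto
        subgoal by (rule der)
        subgoal using nn s_nn by auto
        subgoal using pos s_pos by auto
        done
      thus ?thesis unfolding f_def by simp
    next
      case False
      have KK: "K \<le> - k"
      proof (rule ccontr)
        assume "\<not> K \<le> - k"
        hence "- k < K" by simp
        hence "(- k)\<^sup>2 < K\<^sup>2" using kneg by (intro power_strict_mono) auto
        hence "K * M < K * K" using False by (simp add: power2_eq_square)
        hence "M < K" using Kp by simp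
        hence "(1 - c) * (F + e) < (d * h) * (F + e)" unfolding M_def K_def by (simp add: algebra_simps)
        hence "1 - c < d * h" using e1 by simp
        thus False using A1 by (simp add: algebra_simps)
      qed
      have santi: "s y < s x" if "0 \<le> x" "x < y" "y \<le> 1" for x y
      proof -
        have "s y - s x = (y - x) * (K * (x + y) + 2 * k)"
          unfolding sform by (simp add: algebra_simps power2_eq_square)
        moreover have "K * (x + y) < K * 2" using Kp that by simp
        hence "K * (x + y) + 2 * k < 0" using KK by simp
        moreover have "y - x > 0" using that by simp
        ultimately have "s y - s x < 0" by (simp add: mult_pos_neg)
        thus ?thesis by simp
      qed
      have s0: "s 0 > 0" using Mp unfolding sform by simp
      show ?thesis
      proof (cases "s 1 \<ge> 0")
        case True
        have spos: "s z > 0" if "0 \<le> z" "z < 1" for z using santi[OF that(1,2)] True by simp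
        have "strict_mono_on {0..1} f"
          apply (rule deriv_smono_strict[where I="{0..<1}" and f'="\<lambda>z. h * s z / (D z)\<^sup>2"])
          subgoal by auto
          subgoal by auto
          subgoal by (rule der)
          subgoal using pos spos by auto
          done
        thus ?thesis unfolding f_def by simp
      next
        case False
        have "\<exists>w. 0 \<le> w \<and> w \<le> 1 \<and> s w = 0"
          by (rule IVT2) (use s0 False in \<open>auto simp: sform intro!: continuous_intros\<close>)
        then obtain w where w: "0 \<le> w" "w \<le> 1" "s w = 0" by blast
        have w01: "w \<in> {0<..<1}" using w s0 False by (cases "w = 0"; cases "w = 1") auto
        have posI: "z \<in> {0..<w} \<Longrightarrow> h * s z / (D z)\<^sup>2 > 0" for z
          using pos[of z] santi[of z w] w by auto
        have negI: "z \<in> {w<..1} \<Longrightarrow> h * s z / (D z)\<^sup>2 < 0" for z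
          using neg[of z] santi[of w z] w by auto
        have "strict_mono_on {0..<w} f"
          apply (rule deriv_smono_strict[where I="{0..<w}" and f'="\<lambda>z. h * s z / (D z)\<^sup>2"])
          subgoal using w by auto
          subgoal by auto
          subgoal by (rule der)
          subgoal by (rule posI)
          done
        moreover have "strict_antimono_on {w<..1} f"
          apply (rule deriv_santimono[where I="{w<..1}" and f'="\<lambda>z. h * s z / (D z)\<^sup>2"])
          subgoal using w by auto
          subgoal by auto
          subgoal by (rule der)
          subgoal by (rule negI)
          done
        ultimately show ?thesis unfolding f_def using w01 by blast
      qed
    qed
  qed
qed


lemma mono_transfer: "monotone_on S R R' g \<Longrightarrow> T \<subseteq> S \<Longrightarrow> (\<forall>x\<in>T. f x = g x) \<Longrightarrow> monotone_on T R R' f"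
  by (auto simp: monotone_on_def)

lemma P_open:
  fixes f g :: "real \<Rightarrow> real"
  assumes "strict_mono_on {0..1} g \<or> strict_antimono_on {0..1} g \<or>
         (\<exists>w\<in>{0<..<1}. strict_antimono_on {0..<w} g \<and> strict_mono_on {w<..1} g)"
    and eq: "\<forall>x\<in>{0<..<1}. f x = g x"
  shows "strict_mono_on {0<..<1} f \<or> strict_antimono_on {0<..<1} f \<or>
         (\<exists>w\<in>{0<..<1}. strict_antimono_on {0<..<w} f \<and> strict_mono_on {w<..<1} f)"
  using assms(1)
proof (elim disjE bexE conjE)
  assume a: "strict_mono_on {0..1} g"
  have "strict_mono_on {0<..<1} f" by (rule mono_transfer[OF a]) (use eq in auto)
  thus ?thesis by simp
next
  assume a: "strict_antimono_on {0..1} g"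
  have "strict_antimono_on {0<..<1} f" by (rule mono_transfer[OF a]) (use eq in auto)
  thus ?thesis by simp
next
  fix w :: real assume w: "w \<in> {0<..<1}" and a: "strict_antimono_on {0..<w} g" and b: "strict_mono_on {w<..1} g"
  have "strict_antimono_on {0<..<w} f" by (rule mono_transfer[OF a]) (use eq w in auto)
  moreover have "strict_mono_on {w<..<1} f" by (rule mono_transfer[OF b]) (use eq w in auto)
  ultimately show ?thesis using w by blast
qed

lemma Y_open:
  fixes f g :: "real \<Rightarrow> real"
  assumes "strict_mono_on {0..1} g \<or>
         (\<exists>w\<in>{0<..<1}. strict_mono_on {0..<w} g \<and> strict_antimono_on {w<..1} g)"
    and eq: "\<forall>x\<in>{0<..<1}. f x = g x"
  shows "strict_mono_on {0<..<1} f \<or>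
         (\<exists>w\<in>{0<..<1}. strict_mono_on {0<..<w} f \<and> strict_antimono_on {w<..<1} f)"
  using assms(1)
proof (elim disjE bexE conjE)
  assume a: "strict_mono_on {0..1} g"
  have "strict_mono_on {0<..<1} f" by (rule mono_transfer[OF a]) (use eq in auto)
  thus ?thesis by simp
next
  fix w :: real assume w: "w \<in> {0<..<1}" and a: "strict_mono_on {0..<w} g" and b: "strict_antimono_on {w<..1} g"
  have "strict_mono_on {0<..<w} f" by (rule mono_transfer[OF a]) (use eq w in auto)
  moreover have "strict_antimono_on {w<..<1} f" by (rule mono_transfer[OF b]) (use eq w in auto)
  ultimately show ?thesis using w by blast
qed

lemma steady:
  fixes gI gP :: "real \<Rightarrow> real"
  assumes gI: "admissible_g gI" and gP: "admissible_g gP"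
    and c: "c < 1" and \<sigma>: "\<sigma> > 0" and \<mu>: "\<mu> > 0"
    and Dnz: "1 - c - w\<^sup>2 * d * h \<noteq> 0"
    and fp: "G_map gI gP A c \<gamma> w h d \<sigma> \<mu> Fs b \<beta> (Y, P, Y) = (Y, P, Y)"
  shows "\<exists>x. x = b * tanh (2 * b * \<beta> * x) \<and> P = Pf A c h d Fs ((1 - c) * x) w \<and> Y = Yf A c h d Fs x w"
proof -
  have gI0: "gI 0 = 0" using gI by (simp add: admissible_g_def)
  have gP0: "gP 0 = 0" and gPm: "strict_mono gP" using gP by (auto simp: admissible_g_def)
  define x where "x = P - (1 - w) * Fs - w * d * Y"
  define z where "z = \<mu> * ((1 - w) * Fs + w * d * Y - P + b * (2 * alpha_fn b \<beta> w Fs d Y P - 1))"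
  have e1: "A + c * Y + \<gamma> * gI (Y - Y) + w * h * P = Y" and e2: "P + \<sigma> * gP z = P"
    using fp by (auto simp: G_map_def z_def)
  from e1 gI0 have Yeq: "(1 - c) * Y = A + w * h * P" by (simp add: algebra_simps)
  from e2 \<sigma> have "gP z = gP 0" using gP0 by simp
  hence "z = 0" using gPm by (simp add: strict_mono_eq)
  hence z0: "(1 - w) * Fs + w * d * Y - P + b * (2 * alpha_fn b \<beta> w Fs d Y P - 1) = 0"
    using \<mu> by (simp add: z_def)
  have "2 * alpha_fn b \<beta> w Fs d Y P - 1 = tanh (2 * b * \<beta> * x)"
  proof -
    have ex: "exp (- 4 * b * \<beta> * (P - (1 - w) * Fs - w * d * Y)) = exp (- 2 * (2 * b * \<beta> * x))"
      by (simp add: x_def algebra_simps)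
    have "1 + exp (- 2 * (2 * b * \<beta> * x)) > 0" by (simp add: add_pos_pos)
    thus ?thesis unfolding alpha_fn_def ex tanh_real_altdef by (simp add: field_simps)
  qed
  with z0 have xr: "x = b * tanh (2 * b * \<beta> * x)" by (simp add: x_def algebra_simps)
  have c1: "1 - c \<noteq> 0" using c by simp
  have PD: "P * (1 - c - w\<^sup>2 * d * h) = (1 - w) * (1 - c) * Fs + w * d * A + (1 - c) * x"
  proof -
    have "(1 - c) * x = (1 - c) * P - (1 - w) * (1 - c) * Fs - w * d * ((1 - c) * Y)"
      by (simp add: x_def algebra_simps)
    also have "\<dots> = (1 - c) * P - (1 - w) * (1 - c) * Fs - w * d * (A + w * h * P)" by (simp add: Yeq)
    finally show ?thesis by (simp add: algebra_simps power2_eq_square)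
  qed
  hence Pe: "P = Pf A c h d Fs ((1 - c) * x) w" using Dnz by (simp add: Pf_def field_simps)
  have "(1 - c) * (Y * (1 - c - w\<^sup>2 * d * h)) = (A + w * h * P) * (1 - c - w\<^sup>2 * d * h)"
    by (simp add: Yeq[symmetric])
  also have "\<dots> = A * (1 - c - w\<^sup>2 * d * h) + w * h * (P * (1 - c - w\<^sup>2 * d * h))" by (simp add: algebra_simps)
  also have "\<dots> = (1 - c) * (A + h * w * (Fs + x) - h * Fs * w\<^sup>2)"
    unfolding PD by (simp add: algebra_simps power2_eq_square)
  finally have "Y * (1 - c - w\<^sup>2 * d * h) = A + h * w * (Fs + x) - h * Fs * w\<^sup>2" using c1 by simp
  hence Ye: "Y = Yf A c h d Fs x w" using Dnz by (simp add: Yf_def field_simps)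
  show ?thesis using xr Pe Ye by blast
qed


lemma Pstar_Pf: "Pstar A c h d Fs = Pf A c h d Fs 0"
  by (rule ext) (simp add: Pstar_def Pf_def)

lemma Ystar_Yf: "Ystar A c h d Fs = Yf A c h d Fs 0"
  by (rule ext) (simp add: Ystar_def Yf_def algebra_simps power2_eq_square)

lemma Pf_less_iff:
  assumes "1 - c - w\<^sup>2 * d * h > 0"
  shows "Pf A c h d F e w < Pf A c h d F 0 w \<longleftrightarrow> e < 0"
    and "Pf A c h d F 0 w < Pf A c h d F e w \<longleftrightarrow> e > 0"
  using assms by (simp_all add: Pf_def divide_less_cancel)

theorem proposition3:
  fixes gI gP :: "real \<Rightarrow> real"
    and A c \<gamma> h d \<sigma> \<mu> Fs b \<beta> :: real
  assumes gI: "admissible_g gI" and gP: "admissible_g gP"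
    and A: "A > 0" and c: "0 < c" "c < 1" and \<gamma>: "\<gamma> > 0" and h: "h > 0" and d: "d > 0"
    and \<sigma>: "\<sigma> > 0" and \<mu>: "\<mu> > 0" and Fs: "Fs > 0" and b: "b > 0" and \<beta>: "\<beta> > 0"
    and A1: "1 - c - h * d > 0"
  shows
    "(strict_mono_on {0..1} (Pstar A c h d Fs) \<or>
      strict_antimono_on {0..1} (Pstar A c h d Fs) \<or>
      (\<exists>w\<in>{0<..<1}. strict_antimono_on {0..<w} (Pstar A c h d Fs) \<and>
                     strict_mono_on {w<..1} (Pstar A c h d Fs)))
   \<and> (strict_mono_on {0..1} (Ystar A c h d Fs) \<or>
      (\<exists>w\<in>{0<..<1}. strict_mono_on {0..<w} (Ystar A c h d Fs) \<and>
                     strict_antimono_on {w<..1} (Ystar A c h d Fs)))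
   \<and> (\<forall>YL PL YH PH :: real \<Rightarrow> real.
        1 / sqrt (2 * \<beta>) < b \<and> b < min (d * A / (1 - c)) Fs
        \<and> (\<forall>\<omega>\<in>{0<..<1}.
              G_map gI gP A c \<gamma> \<omega> h d \<sigma> \<mu> Fs b \<beta> (YL \<omega>, PL \<omega>, YL \<omega>) = (YL \<omega>, PL \<omega>, YL \<omega>)
            \<and> PL \<omega> < Pstar A c h d Fs \<omega>
            \<and> G_map gI gP A c \<gamma> \<omega> h d \<sigma> \<mu> Fs b \<beta> (YH \<omega>, PH \<omega>, YH \<omega>) = (YH \<omega>, PH \<omega>, YH \<omega>)
            \<and> Pstar A c h d Fs \<omega> < PH \<omega>
            \<and> PL \<omega> \<noteq> Pstar A c h d Fs \<omega>
                 - (1 - c) / (1 - c - \<omega>\<^sup>2 * d * h) * sqrt (b\<^sup>2 - 1 / (2 * \<beta>)))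
        \<longrightarrow> (\<forall>(Yj, Pj) \<in> {(YL, PL), (YH, PH)}.
              (strict_mono_on {0<..<1} Pj \<or> strict_antimono_on {0<..<1} Pj \<or>
               (\<exists>w\<in>{0<..<1}. strict_antimono_on {0<..<w} Pj \<and> strict_mono_on {w<..<1} Pj))
            \<and> (strict_mono_on {0<..<1} Yj \<or>
               (\<exists>w\<in>{0<..<1}. strict_mono_on {0<..<w} Yj \<and> strict_antimono_on {w<..<1} Yj))))"
proof -
  let ?D = "\<lambda>w. 1 - c - w\<^sup>2 * d * h"
  have Dp: "w \<in> {0<..<1} \<Longrightarrow> ?D w > 0" for w using D_pos[OF A1 d h, of w] by auto
  have i1: "strict_mono_on {0..1} (Pstar A c h d Fs) \<or>
      strict_antimono_on {0..1} (Pstar A c h d Fs) \<or>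
      (\<exists>w\<in>{0<..<1}. strict_antimono_on {0..<w} (Pstar A c h d Fs) \<and>
                     strict_mono_on {w<..1} (Pstar A c h d Fs))"
    unfolding Pstar_Pf by (rule P_shape) (use c h d A1 Fs A in auto)
  have i2: "strict_mono_on {0..1} (Ystar A c h d Fs) \<or>
      (\<exists>w\<in>{0<..<1}. strict_mono_on {0..<w} (Ystar A c h d Fs) \<and>
                     strict_antimono_on {w<..1} (Ystar A c h d Fs))"
    unfolding Ystar_Yf by (rule Y_shape) (use c h d A1 Fs in auto)
  have kpos: "2 * b * \<beta> > 0" using b \<beta> by simp
  have ii: "(\<forall>(Yj, Pj) \<in> {(YL, PL), (YH, PH)}.
              (strict_mono_on {0<..<1} Pj \<or> strict_antimono_on {0<..<1} Pj \<or>
               (\<exists>w\<in>{0<..<1}. strict_antimono_on {0<..<w} Pj \<and> strict_mono_on {w<..<1} Pj))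
            \<and> (strict_mono_on {0<..<1} Yj \<or>
               (\<exists>w\<in>{0<..<1}. strict_mono_on {0<..<w} Yj \<and> strict_antimono_on {w<..<1} Yj)))"
    if H: "1 / sqrt (2 * \<beta>) < b \<and> b < min (d * A / (1 - c)) Fs
        \<and> (\<forall>\<omega>\<in>{0<..<1}.
              G_map gI gP A c \<gamma> \<omega> h d \<sigma> \<mu> Fs b \<beta> (YL \<omega>, PL \<omega>, YL \<omega>) = (YL \<omega>, PL \<omega>, YL \<omega>)
            \<and> PL \<omega> < Pstar A c h d Fs \<omega>
            \<and> G_map gI gP A c \<gamma> \<omega> h d \<sigma> \<mu> Fs b \<beta> (YH \<omega>, PH \<omega>, YH \<omega>) = (YH \<omega>, PH \<omega>, YH \<omega>)
            \<and> Pstar A c h d Fs \<omega> < PH \<omega>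
            \<and> PL \<omega> \<noteq> Pstar A c h d Fs \<omega>
                 - (1 - c) / (1 - c - \<omega>\<^sup>2 * d * h) * sqrt (b\<^sup>2 - 1 / (2 * \<beta>)))"
    for YL PL YH PH :: "real \<Rightarrow> real"
  proof -
    have bF: "b < Fs" and bA: "b < d * A / (1 - c)" using H by auto
    have bA': "(1 - c) * b < d * A" using bA c by (simp add: field_simps)
    have exL: "\<exists>x. x < 0 \<and> x = b * tanh (2 * b * \<beta> * x) \<and> PL w = Pf A c h d Fs ((1 - c) * x) w \<and> YL w = Yf A c h d Fs x w"
      if w: "w \<in> {0<..<1}" for w
    proof -
      from H w have fp: "G_map gI gP A c \<gamma> w h d \<sigma> \<mu> Fs b \<beta> (YL w, PL w, YL w) = (YL w, PL w, YL w)"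
        and lt: "PL w < Pstar A c h d Fs w" by auto
      from steady[OF gI gP c(2) \<sigma> \<mu> _ fp] Dp[OF w] obtain x where
        x: "x = b * tanh (2 * b * \<beta> * x)" "PL w = Pf A c h d Fs ((1 - c) * x) w" "YL w = Yf A c h d Fs x w"
        by auto
      from lt x(2) Pf_less_iff(1)[OF Dp[OF w]] have "(1 - c) * x < 0" by (simp add: Pstar_Pf)
      hence "x < 0" using c by (simp add: mult_less_0_iff)
      with x show ?thesis by blast
    qed
    have exH: "\<exists>x. x > 0 \<and> x = b * tanh (2 * b * \<beta> * x) \<and> PH w = Pf A c h d Fs ((1 - c) * x) w \<and> YH w = Yf A c h d Fs x w"
      if w: "w \<in> {0<..<1}" for w
    proof -
      from H w have fp: "G_map gI gP A c \<gamma> w h d \<sigma> \<mu> Fs b \<beta> (YH w, PH w, YH w) = (YH w, PH w, YH w)"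
        and lt: "Pstar A c h d Fs w < PH w" by auto
      from steady[OF gI gP c(2) \<sigma> \<mu> _ fp] Dp[OF w] obtain x where
        x: "x = b * tanh (2 * b * \<beta> * x)" "PH w = Pf A c h d Fs ((1 - c) * x) w" "YH w = Yf A c h d Fs x w"
        by auto
      from lt x(2) Pf_less_iff(2)[OF Dp[OF w]] have "(1 - c) * x > 0" by (simp add: Pstar_Pf)
      hence "x > 0" using c by (simp add: zero_less_mult_iff)
      with x show ?thesis by blast
    qed
    have half: "(1/2 :: real) \<in> {0<..<1}" by simp
    obtain xL where xL: "xL < 0" "xL = b * tanh (2 * b * \<beta> * xL)" using exL[OF half] by blast
    obtain xH where xH: "xH > 0" "xH = b * tanh (2 * b * \<beta> * xH)" using exH[OF half] by blast
    have PLe: "\<forall>w\<in>{0<..<1}. PL w = Pf A c h d Fs ((1 - c) * xL) w" and YLe: "\<forall>w\<in>{0<..<1}. YL w = Yf A c h d Fs xL w"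
    proof -
      { fix w :: real assume w: "w \<in> {0<..<1}"
        from exL[OF w] obtain x where x: "x < 0" "x = b * tanh (2 * b * \<beta> * x)"
          "PL w = Pf A c h d Fs ((1 - c) * x) w" "YL w = Yf A c h d Fs x w" by blast
        have "x = xL" by (rule root_unique_neg[OF b kpos x(1) xL(1) x(2) xL(2)])
        with x have "PL w = Pf A c h d Fs ((1 - c) * xL) w \<and> YL w = Yf A c h d Fs xL w" by simp }
      thus "\<forall>w\<in>{0<..<1}. PL w = Pf A c h d Fs ((1 - c) * xL) w" "\<forall>w\<in>{0<..<1}. YL w = Yf A c h d Fs xL w" by auto
    qed
    have PHe: "\<forall>w\<in>{0<..<1}. PH w = Pf A c h d Fs ((1 - c) * xH) w" and YHe: "\<forall>w\<in>{0<..<1}. YH w = Yf A c h d Fs xH w"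
    proof -
      { fix w :: real assume w: "w \<in> {0<..<1}"
        from exH[OF w] obtain x where x: "x > 0" "x = b * tanh (2 * b * \<beta> * x)"
          "PH w = Pf A c h d Fs ((1 - c) * x) w" "YH w = Yf A c h d Fs x w" by blast
        have "x = xH" by (rule root_unique_pos[OF b kpos x(1) xH(1) x(2) xH(2)])
        with x have "PH w = Pf A c h d Fs ((1 - c) * xH) w \<and> YH w = Yf A c h d Fs xH w" by simp }
      thus "\<forall>w\<in>{0<..<1}. PH w = Pf A c h d Fs ((1 - c) * xH) w" "\<forall>w\<in>{0<..<1}. YH w = Yf A c h d Fs xH w" by auto
    qed
    have xLb: "- xL < b"
    proof -
      have "tanh (2 * b * \<beta> * xL) > -1" by (rule tanh_real_gt_neg1)
      hence "b * tanh (2 * b * \<beta> * xL) > b * (-1)" using b by (intro mult_strict_left_mono) auto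
      thus ?thesis using xL(2) by simp
    qed
    have c1: "1 - c > 0" using c by simp
    have L1: "(1 - c) * Fs + (1 - c) * xL > 0"
    proof -
      have "Fs + xL > 0" using xLb bF by simp
      thus ?thesis using c1 by (simp add: distrib_left[symmetric])
    qed
    have L2: "d * A + (1 - c) * xL > 0"
    proof -
      have "(1 - c) * (- xL) < (1 - c) * b" using xLb c1 by (intro mult_strict_left_mono) auto
      thus ?thesis using bA' by simp
    qed
    have PLr: "strict_mono_on {0<..<1} PL \<or> strict_antimono_on {0<..<1} PL \<or>
               (\<exists>w\<in>{0<..<1}. strict_antimono_on {0<..<w} PL \<and> strict_mono_on {w<..<1} PL)"
      by (rule P_open[OF P_shape PLe]) (use c h d A1 L1 L2 in auto)
    have YLr: "strict_mono_on {0<..<1} YL \<or>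
               (\<exists>w\<in>{0<..<1}. strict_mono_on {0<..<w} YL \<and> strict_antimono_on {w<..<1} YL)"
      by (rule Y_open[OF Y_shape YLe]) (use c h d A1 xLb bF in auto)
    have H1: "(1 - c) * Fs + (1 - c) * xH > 0" using c1 Fs xH(1) by (intro add_pos_pos mult_pos_pos)
    have H2: "d * A + (1 - c) * xH > 0" using c1 d A xH(1) by (intro add_pos_pos mult_pos_pos)
    have PHr: "strict_mono_on {0<..<1} PH \<or> strict_antimono_on {0<..<1} PH \<or>
               (\<exists>w\<in>{0<..<1}. strict_antimono_on {0<..<w} PH \<and> strict_mono_on {w<..<1} PH)"
      by (rule P_open[OF P_shape PHe]) (use c h d A1 H1 H2 in auto)
    have YHr: "strict_mono_on {0<..<1} YH \<or>
               (\<exists>w\<in>{0<..<1}. strict_mono_on {0<..<w} YH \<and> strict_antimono_on {w<..<1} YH)"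
      by (rule Y_open[OF Y_shape YHe]) (use c h d A1 xH Fs in auto)
    show ?thesis using PLr YLr PHr YHr by auto
  qed
  show ?thesis using i1 i2 ii by blast
qed

end
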